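(* In an inverse problem, fix data $y_k$ and let $P_{k-1},Q_{k-1}\in\bar{\mathcal{P}}_k(\mathcal{X})\cap\mathcal{P}_1(\mathcal{X})$. Assume $$\frac{\mathbb{E}_{(X,X')\sim P_{k-1}\otimes Q_{k-1}}[d_{\mathcal{X}}(X,X')h(y_k,X)h(y_k,X')]}{\mathbb{E}_{X\sim P_{k-1}}[h(y_k,X)]\,\mathbb{E}_{X\sim Q_{k-1}}[h(y_k,X)]}\le\sup_{x_0\in\mathcal{X}}\Big|\mathbb{E}_{X\sim P_{k-1}}[d_{\mathcal{X}}(X,x_0)]-\mathbb{E}_{X\sim Q_{k-1}}[d_{\mathcal{X}}(X,x_0)]\Big|.$$ Then $P_k=F_k(P_{k-1})$ and $Q_k^*=F_k(Q_{k-1})$ satisfy $W_1(P_k,Q_k^* )\le W_1(P_{k-1},Q_{k-1})$.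
   Context: $(\mathcal{X},d_{\mathcal{X}})$ is a Polish metric space; the likelihood $x\mapsto h(y_k,x)\ge0$ is measurable. For a Borel probability measure $\mu$ on $\mathcal{X}$, $Z_k(\mu)=\int h(y_k,x)\mu(dx)$ and $F_k\mu(dx)=h(y_k,x)\mu(dx)/Z_k(\mu)$. $\bar{\mathcal{P}}_k(\mathcal{X})=\{\mu:0<Z_k(\mu)<\infty\}$; $\mathcal{P}_1(\mathcal{X})$ is the set of probability measures with finite first moment; $W_1$ is the 1-Wasserstein distance w.r.t. $d_{\mathcal{X}}$; $P\otimes Q$ denotes the product measure. *)

theory Defs
  imports "HOL-Probability.Probability"
begin

definition borel_prob :: "'a::metric_space measure \<Rightarrow> bool" where
  "borel_prob P \<longleftrightarrow> prob_space P \<and> sets P = sets borel"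

definition finite_first_moment :: "'a::metric_space measure \<Rightarrow> bool" where
  "finite_first_moment P \<longleftrightarrow> (\<exists>x0. (\<integral>\<^sup>+ x. ennreal (dist x x0) \<partial>P) < \<infinity>)"

definition couplings :: "'a::metric_space measure \<Rightarrow> 'a measure \<Rightarrow> ('a \<times> 'a) measure set" where
  "couplings P Q = {C. prob_space C \<and> sets C = sets (borel \<Otimes>\<^sub>M borel)
      \<and> distr C borel fst = P \<and> distr C borel snd = Q}"

definition W1 :: "'a::metric_space measure \<Rightarrow> 'a measure \<Rightarrow> ennreal" where
  "W1 P Q = (INF C \<in> couplings P Q. \<integral>\<^sup>+ z. ennreal (dist (fst z) (snd z)) \<partial>C)"

text \<open>Normalising constant Z_k(mu) = int h(y_k,x) mu(dx), with h = h(y_k, \<cdot>) (may be \<infinity>).\<close>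
definition Zk :: "('a \<Rightarrow> real) \<Rightarrow> 'a measure \<Rightarrow> ennreal" where
  "Zk h \<mu> = (\<integral>\<^sup>+ x. ennreal (h x) \<partial>\<mu>)"

definition barP :: "('a::metric_space \<Rightarrow> real) \<Rightarrow> 'a measure set" where
  "barP h = {\<mu>. borel_prob \<mu> \<and> 0 < Zk h \<mu> \<and> Zk h \<mu> < \<infinity>}"

definition Fk :: "('a \<Rightarrow> real) \<Rightarrow> 'a measure \<Rightarrow> 'a measure" where
  "Fk h \<mu> = density \<mu> (\<lambda>x. ennreal (h x) / Zk h \<mu>)"

end

theory Submission
  imports Defs
begin
lemma moment_any:
  fixes P :: "'a::polish_space measure"
  assumes "borel_prob P" "finite_first_moment P"
  shows "(\<integral>\<^sup>+ x. ennreal (dist x x0) \<partial>P) < \<infinity>"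
proof -
  interpret prob_space P using assms(1) by (simp add: borel_prob_def)
  have sP: "sets P = sets borel" using assms(1) by (simp add: borel_prob_def)
  obtain x1 where x1: "(\<integral>\<^sup>+ x. ennreal (dist x x1) \<partial>P) < \<infinity>"
    using assms(2) by (auto simp: finite_first_moment_def)
  have m: "(\<lambda>x. ennreal (dist x x1)) \<in> borel_measurable P"
    unfolding measurable_cong_sets[OF sP refl] by measurable
  have "(\<integral>\<^sup>+ x. ennreal (dist x x0) \<partial>P) \<le> (\<integral>\<^sup>+ x. ennreal (dist x x1) + ennreal (dist x1 x0) \<partial>P)"
    by (intro nn_integral_mono) (simp add: dist_triangle flip: ennreal_plus)
  also have "\<dots> = (\<integral>\<^sup>+ x. ennreal (dist x x1) \<partial>P) + ennreal (dist x1 x0)"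
    using m by (simp add: nn_integral_add emeasure_space_1)
  also have "\<dots> < \<infinity>" using x1 by (simp add: ennreal_add_less_top)
  finally show ?thesis .
qed

lemma coupling_bound:
  fixes P Q :: "'a::polish_space measure"
  assumes P: "borel_prob P" "finite_first_moment P"
    and Q: "borel_prob Q" "finite_first_moment Q"
    and C: "C \<in> couplings P Q"
  shows "ennreal \<bar>(\<integral>x. dist x x0 \<partial>P) - (\<integral>x. dist x x0 \<partial>Q)\<bar> \<le> (\<integral>\<^sup>+ z. ennreal (dist (fst z) (snd z)) \<partial>C)"
proof -
  have sP: "sets P = sets borel" using P(1) by (simp add: borel_prob_def)
  have sQ: "sets Q = sets borel" using Q(1) by (simp add: borel_prob_def)
  have sC: "sets C = sets (borel \<Otimes>\<^sub>M borel)" and dP: "distr C borel fst = P" and dQ: "distr C borel snd = Q"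
    using C by (auto simp: couplings_def)
  have mf: "fst \<in> measurable C borel" unfolding measurable_cong_sets[OF sC refl] by measurable
  have ms: "snd \<in> measurable C borel" unfolding measurable_cong_sets[OF sC refl] by measurable
  define a where "a = (\<integral>\<^sup>+ x. ennreal (dist x x0) \<partial>P)"
  define b where "b = (\<integral>\<^sup>+ x. ennreal (dist x x0) \<partial>Q)"
  define c where "c = (\<integral>\<^sup>+ z. ennreal (dist (fst z) (snd z)) \<partial>C)"
  have a_fin: "a < \<infinity>" unfolding a_def by (rule moment_any[OF P])
  have b_fin: "b < \<infinity>" unfolding b_def by (rule moment_any[OF Q])
  have ia: "(\<integral>x. dist x x0 \<partial>P) = enn2real a" unfolding a_def
    by (rule integral_eq_nn_integral) (auto simp: measurable_cong_sets[OF sP refl])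
  have ib: "(\<integral>x. dist x x0 \<partial>Q) = enn2real b" unfolding b_def
    by (rule integral_eq_nn_integral) (auto simp: measurable_cong_sets[OF sQ refl])
  have a2: "a = (\<integral>\<^sup>+ z. ennreal (dist (fst z) x0) \<partial>C)"
    unfolding a_def dP[symmetric] by (subst nn_integral_distr[OF mf]) auto
  have b2: "b = (\<integral>\<^sup>+ z. ennreal (dist (snd z) x0) \<partial>C)"
    unfolding b_def dQ[symmetric] by (subst nn_integral_distr[OF ms]) auto
  have mdc: "(\<lambda>z. ennreal (dist (fst z) (snd z))) \<in> borel_measurable C"
    unfolding measurable_cong_sets[OF sC refl] by measurable
  have mfc: "(\<lambda>z. ennreal (dist (fst z) x0)) \<in> borel_measurable C"
    unfolding measurable_cong_sets[OF sC refl] by measurable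
  have msc: "(\<lambda>z. ennreal (dist (snd z) x0)) \<in> borel_measurable C"
    unfolding measurable_cong_sets[OF sC refl] by measurable
  have ab: "a \<le> b + c"
  proof -
    have "a \<le> (\<integral>\<^sup>+ z. ennreal (dist (snd z) x0) + ennreal (dist (fst z) (snd z)) \<partial>C)"
      unfolding a2 by (intro nn_integral_mono)
        (simp add: add.commute flip: ennreal_plus, metis dist_triangle add.commute)
    also have "\<dots> = b + c" unfolding b2 c_def using msc mdc by (simp add: nn_integral_add)
    finally show ?thesis .
  qed
  have ba: "b \<le> a + c"
  proof -
    have "b \<le> (\<integral>\<^sup>+ z. ennreal (dist (fst z) x0) + ennreal (dist (fst z) (snd z)) \<partial>C)"
      unfolding b2 by (intro nn_integral_mono)
        (simp add: add.commute flip: ennreal_plus, metis dist_triangle dist_commute)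
    also have "\<dots> = a + c" unfolding a2 c_def using mfc mdc by (simp add: nn_integral_add)
    finally show ?thesis .
  qed
  show ?thesis
  proof (cases "c = \<infinity>")
    case True then show ?thesis by (simp add: c_def)
  next
    case False
    obtain ra where ra: "a = ennreal ra" "ra \<ge> 0" using a_fin by (cases a) auto
    obtain rb where rb: "b = ennreal rb" "rb \<ge> 0" using b_fin by (cases b) auto
    obtain rc where rc: "c = ennreal rc" "rc \<ge> 0" using False by (cases c) auto
    have "ra \<le> rb + rc" using ab ra rb rc by (simp flip: ennreal_plus)
    moreover have "rb \<le> ra + rc" using ba ra rb rc by (simp flip: ennreal_plus)
    ultimately have "\<bar>ra - rb\<bar> \<le> rc" by linarith
    then show ?thesis unfolding ia ib c_def[symmetric] using ra rb rc by simp
  qed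
qed

lemma Fk_prob:
  fixes h :: "'a::polish_space \<Rightarrow> real"
  assumes hm: "h \<in> borel_measurable borel" and P: "P \<in> barP h"
  shows "borel_prob (Fk h P)"
proof -
  have sP: "sets P = sets borel" and Z: "0 < Zk h P" "Zk h P < \<infinity>" using P by (auto simp: barP_def borel_prob_def)
  have m: "(\<lambda>x. ennreal (h x)) \<in> borel_measurable P" unfolding measurable_cong_sets[OF sP refl] using hm by measurable
  have "emeasure (Fk h P) (space (Fk h P)) = (\<integral>\<^sup>+ x. ennreal (h x) / Zk h P \<partial>P)"
    unfolding Fk_def by (subst emeasure_density) (use m in auto)
  also have "\<dots> = Zk h P / Zk h P" using m by (simp add: nn_integral_divide Zk_def)
  also have "\<dots> = 1" using Z by simp
  finally show ?thesis unfolding borel_prob_def using sP by (auto intro: prob_spaceI simp: Fk_def)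
qed

lemma prod_coupling:
  fixes A B :: "'a::polish_space measure"
  assumes A: "borel_prob A" and B: "borel_prob B"
  shows "A \<Otimes>\<^sub>M B \<in> couplings A B"
proof -
  interpret A: prob_space A using A by (simp add: borel_prob_def)
  interpret B: prob_space B using B by (simp add: borel_prob_def)
  interpret AB: pair_prob_space A B by unfold_locales
  have sA: "sets A = sets borel" and sB: "sets B = sets borel" using A B by (auto simp: borel_prob_def)
  have s: "sets (A \<Otimes>\<^sub>M B) = sets (borel \<Otimes>\<^sub>M borel)" by (rule sets_pair_measure_cong[OF sA sB])
  have "distr (A \<Otimes>\<^sub>M B) borel fst = distr (A \<Otimes>\<^sub>M B) A fst"
    by (rule distr_cong) (use sA in auto)
  also have "\<dots> = A" by (rule B.distr_pair_fst)
  finally have d1: "distr (A \<Otimes>\<^sub>M B) borel fst = A" .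
  have "distr (A \<Otimes>\<^sub>M B) borel snd = distr (A \<Otimes>\<^sub>M B) B snd"
    by (rule distr_cong) (use sB in auto)
  also have "\<dots> = B"
  proof (intro measure_eqI)
    fix X assume X: "X \<in> sets (distr (A \<Otimes>\<^sub>M B) B snd)"
    from X have "emeasure (distr (A \<Otimes>\<^sub>M B) B snd) X = emeasure (A \<Otimes>\<^sub>M B) (space A \<times> X)"
      by (auto simp add: emeasure_distr space_pair_measure dest: sets.sets_into_space intro!: arg_cong2[where f=emeasure])
    with X show "emeasure (distr (A \<Otimes>\<^sub>M B) B snd) X = emeasure B X"
      using B.emeasure_pair_measure_Times[OF sets.top[of A]] X by (simp add: A.emeasure_space_1)
  qed simp
  finally have d2: "distr (A \<Otimes>\<^sub>M B) borel snd = B" .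
  show ?thesis unfolding couplings_def using s d1 d2 AB.prob_space_axioms by auto
qed

theorem theorem5:
  fixes h :: "'a::polish_space \<Rightarrow> real"
    and P Q :: "'a measure"
  assumes h_meas: "h \<in> borel_measurable borel"
    and h_nonneg: "\<And>x. h x \<ge> 0"
    and P: "P \<in> barP h" "finite_first_moment P"
    and Q: "Q \<in> barP h" "finite_first_moment Q"
    and cond: "(\<integral>\<^sup>+ z. ennreal (dist (fst z) (snd z) * h (fst z) * h (snd z)) \<partial>(P \<Otimes>\<^sub>M Q))
                  / (Zk h P * Zk h Q)
               \<le> (SUP x0. ennreal \<bar>(\<integral>x. dist x x0 \<partial>P) - (\<integral>x. dist x x0 \<partial>Q)\<bar>)"
  shows "W1 (Fk h P) (Fk h Q) \<le> W1 P Q"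
proof -
  have bP: "borel_prob P" and sP: "sets P = sets borel" and ZP: "0 < Zk h P" "Zk h P < \<infinity>"
    using P by (auto simp: barP_def borel_prob_def)
  have bQ: "borel_prob Q" and sQ: "sets Q = sets borel" and ZQ: "0 < Zk h Q" "Zk h Q < \<infinity>"
    using Q by (auto simp: barP_def borel_prob_def)
  have FP: "borel_prob (Fk h P)" by (rule Fk_prob[OF h_meas P(1)])
  have FQ: "borel_prob (Fk h Q)" by (rule Fk_prob[OF h_meas Q(1)])
  have mP: "(\<lambda>x. ennreal (h x) / Zk h P) \<in> borel_measurable P"
    unfolding measurable_cong_sets[OF sP refl] using h_meas by measurable
  have mQ: "(\<lambda>x. ennreal (h x) / Zk h Q) \<in> borel_measurable Q"
    unfolding measurable_cong_sets[OF sQ refl] using h_meas by measurable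
  have sfQ: "sigma_finite_measure Q" using bQ by (auto simp: borel_prob_def intro: prob_space_imp_sigma_finite)
  have sfFQ: "sigma_finite_measure (density Q (\<lambda>x. ennreal (h x) / Zk h Q))"
    using FQ by (auto simp: borel_prob_def Fk_def intro: prob_space_imp_sigma_finite)
  have sPQ: "sets (P \<Otimes>\<^sub>M Q) = sets (borel \<Otimes>\<^sub>M borel)" by (rule sets_pair_measure_cong[OF sP sQ])
  have md: "(\<lambda>z. ennreal (dist (fst z) (snd z))) \<in> borel_measurable (P \<Otimes>\<^sub>M Q)"
    unfolding measurable_cong_sets[OF sPQ refl] by measurable
  have md2: "(\<lambda>z. ennreal (dist (fst z) (snd z) * h (fst z) * h (snd z))) \<in> borel_measurable (P \<Otimes>\<^sub>M Q)"
    unfolding measurable_cong_sets[OF sPQ refl] using h_meas by measurable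
  have mprod: "(\<lambda>(x,y). ennreal (h x) / Zk h P * (ennreal (h y) / Zk h Q)) \<in> borel_measurable (P \<Otimes>\<^sub>M Q)"
    unfolding measurable_cong_sets[OF sPQ refl] using h_meas by measurable
  have "W1 (Fk h P) (Fk h Q) \<le> (\<integral>\<^sup>+ z. ennreal (dist (fst z) (snd z)) \<partial>(Fk h P \<Otimes>\<^sub>M Fk h Q))"
    unfolding W1_def by (rule INF_lower[OF prod_coupling[OF FP FQ]])
  also have "\<dots> = (\<integral>\<^sup>+ z. ennreal (dist (fst z) (snd z)) \<partial>(density (P \<Otimes>\<^sub>M Q) (\<lambda>(x,y). ennreal (h x) / Zk h P * (ennreal (h y) / Zk h Q))))"
    unfolding Fk_def by (subst pair_measure_density[OF mP mQ sfQ sfFQ]) rule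
  also have "\<dots> = (\<integral>\<^sup>+ z. (\<lambda>(x,y). ennreal (h x) / Zk h P * (ennreal (h y) / Zk h Q)) z * ennreal (dist (fst z) (snd z)) \<partial>(P \<Otimes>\<^sub>M Q))"
    by (rule nn_integral_density[OF mprod md])
  also have "\<dots> = (\<integral>\<^sup>+ z. ennreal (dist (fst z) (snd z) * h (fst z) * h (snd z)) * inverse (Zk h P * Zk h Q) \<partial>(P \<Otimes>\<^sub>M Q))"
  proof (intro nn_integral_cong)
    fix z :: "'a \<times> 'a"
    obtain x y where z: "z = (x,y)" by (cases z)
    show "(\<lambda>(x,y). ennreal (h x) / Zk h P * (ennreal (h y) / Zk h Q)) z * ennreal (dist (fst z) (snd z)) =
      ennreal (dist (fst z) (snd z) * h (fst z) * h (snd z)) * inverse (Zk h P * Zk h Q)"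
      unfolding z using ZP ZQ h_nonneg
      by (simp add: divide_ennreal_def ennreal_inverse_mult ennreal_mult'' mult_ac)
  qed
  also have "\<dots> = (\<integral>\<^sup>+ z. ennreal (dist (fst z) (snd z) * h (fst z) * h (snd z)) \<partial>(P \<Otimes>\<^sub>M Q)) / (Zk h P * Zk h Q)"
    using md2 by (simp add: nn_integral_multc divide_ennreal_def)
  also have "\<dots> \<le> (SUP x0. ennreal \<bar>(\<integral>x. dist x x0 \<partial>P) - (\<integral>x. dist x x0 \<partial>Q)\<bar>)" by (rule cond)
  also have "\<dots> \<le> W1 P Q"
    unfolding W1_def by (intro SUP_least INF_greatest coupling_bound[OF bP P(2) bQ Q(2)])
  finally show ?thesis .
qed
end
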